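(* Let $X$ be a Banach space, $T>0$, $p\in\{1,2\}$ the order of the BDF method used (BDF1 or BDF2), and $r\in\{1,\dots,p\}$. Let $f\in C^r([0,T];X)$ and $\widetilde f\in C([0,T];X)$ with $0=f(0)=f'(0)=\dots=f^{(r-1)}(0)=\widetilde f(0)$ (both extended by zero to negative times). Then for all $n$ with $t=t_n=n\Delta t\le T$, $$\big\|(\partial_t^{-1}f)(t)-[(\partial_t^{\Delta t})^{-1}\widetilde f]^n\big\|_X\le Ct\Big[(\Delta t)^r\max_{\tau\in[0,t]}\|f^{(r)}(\tau)\|_X+\max_{\tau\in[0,t]}\|f(\tau)-\widetilde f(\tau)\|_X\Big].$$
   Context: $\partial_t^{-1}f(t)=\int_0^tf(\xi)\,d\xi$. Convolution quadrature: BDF1 has $\delta(z)=1-z$, BDF2 has $\delta(z)=\frac32-2z+\frac12z^2$; the weights $w_j$ are defined by $\frac{\Delta t}{\delta(z)}=\sum_{j\ge0}w_jz^j$, and $[(\partial_t^{\Delta t})^{-1}\widetilde f]^n=\sum_{j=0}^nw_j\widetilde f(t_{n-j})$, $t_j=j\Delta t$. The constant $C$ is independent of $\Delta t$, $f$, $\widetilde f$ and $n$. *)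

theory Defs
  imports "HOL-Analysis.Analysis" "HOL-Computational_Algebra.Formal_Power_Series"
begin

definition bdf_delta :: "nat \<Rightarrow> real fps" where
  "bdf_delta p = (if p = 1 then 1 - fps_X
                  else fps_const (3/2) - fps_const 2 * fps_X + fps_const (1/2) * fps_X ^ 2)"

definition cq_weight :: "nat \<Rightarrow> real \<Rightarrow> nat \<Rightarrow> real" where
  "cq_weight p dt j = fps_nth (fps_const dt * inverse (bdf_delta p)) j"

text \<open>Discrete integral [(partial_t^dt)^{-1} g]^n = sum_{j=0}^n w_j g(t_{n-j}), t_j = j dt.\<close>
definition cq_integral :: "nat \<Rightarrow> real \<Rightarrow> (real \<Rightarrow> 'a::real_normed_vector) \<Rightarrow> nat \<Rightarrow> 'a" where
  "cq_integral p dt g n = (\<Sum>j=0..n. cq_weight p dt j *\<^sub>R g (real (n - j) * dt))"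

text \<open>Df k is the k-th derivative of f = Df 0, f in C^r([0,T];X) (one-sided at endpoints).\<close>
definition Cr_derivs :: "nat \<Rightarrow> real \<Rightarrow> (nat \<Rightarrow> real \<Rightarrow> 'a::real_normed_vector) \<Rightarrow> bool" where
  "Cr_derivs r T Df \<longleftrightarrow>
     (\<forall>k<r. \<forall>t\<in>{0..T}. (Df k has_vector_derivative Df (Suc k) t) (at t within {0..T}))
     \<and> continuous_on {0..T} (Df r)"

end

theory Submission
  imports Defs
begin


lemma w1: "cq_weight 1 dt j = dt"
proof -
  have "inverse (bdf_delta 1) = Abs_fps (\<lambda>_. 1)"
    unfolding bdf_delta_def
    by (intro fps_inverse_unique fps_ext) (auto simp: algebra_simps)
  then show ?thesis by (simp add: cq_weight_def)
qed

lemma w2: "cq_weight 2 dt j = dt * (1 - (1/3) ^ Suc j)"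
proof -
  have "inverse (bdf_delta 2) = Abs_fps (\<lambda>j. 1 - (1/3::real) ^ Suc j)" (is "_ = ?A")
    unfolding bdf_delta_def
  proof (intro fps_inverse_unique fps_ext)
    fix n
    have e: "(if (2::nat) = 1 then 1 - fps_X else fps_const (3/2) - fps_const 2 * fps_X + fps_const (1/2) * fps_X ^ 2) * ?A
      = fps_const (3/2) * ?A - fps_const 2 * (fps_X * ?A) + fps_const (1/2) * (fps_X ^ 2 * ?A)"
      by (simp add: algebra_simps)
    show "fps_nth ((if (2::nat) = 1 then 1 - fps_X else fps_const (3/2) - fps_const 2 * fps_X + fps_const (1/2) * fps_X ^ 2) * ?A) n = fps_nth (1::real fps) n"
    proof -
      have c: "\<And>(c::real) B. fps_nth (fps_const c * B) n = c * fps_nth B n" by (subst fps_const_mult_left) simp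
      have h2: "fps_nth (fps_X^2 * ?A) n = (if n < 2 then 0 else 1 - (1/3::real) ^ Suc (n-2))"
        by (simp add: fps_X_power_mult_nth)
      have h1: "fps_nth (fps_X * ?A) n = (if n = 0 then 0 else 1 - (1/3::real) ^ Suc (n-1))"
        by (cases n) simp_all
      show ?thesis unfolding e fps_sub_nth fps_add_nth c h1 h2
        apply (cases n; simp)
        subgoal for m by (cases m; simp add: field_simps)
        done
    qed
  qed
  then show ?thesis by (simp add: cq_weight_def)
qed


lemma mvt_bound:
  fixes f f' :: "real \<Rightarrow> 'a::real_normed_vector"
  assumes ab: "a \<le> b"
    and d: "\<And>s. s \<in> {a..b} \<Longrightarrow> (f has_vector_derivative f' s) (at s within {a..b})"
    and B: "\<And>s. s \<in> {a..b} \<Longrightarrow> norm (f' s) \<le> M"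
  shows "norm (f b - f a) \<le> M * (b - a)"
proof -
  have "norm (f b - f a) \<le> M * norm (b - a)"
  proof (rule differentiable_bound[of "{a..b}" f "\<lambda>s h. h *\<^sub>R f' s" M])
    show "convex {a..b}" by simp
    show "(f has_derivative (\<lambda>h. h *\<^sub>R f' x)) (at x within {a..b})" if "x \<in> {a..b}" for x
      using d[OF that] by (simp add: has_vector_derivative_def)
    show "onorm (\<lambda>h. h *\<^sub>R f' x) \<le> M" if "x \<in> {a..b}" for x
    proof (rule onorm_le)
      fix h :: real
      show "norm (h *\<^sub>R f' x) \<le> M * norm h"
        using B[OF that] by (simp add: mult.commute[of M] mult_left_mono)
    qed
  qed (use ab in auto)
  then show ?thesis using ab by simp
qed

lemma cont_of_deriv:
  fixes f f' :: "real \<Rightarrow> 'a::real_normed_vector"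
  assumes d: "\<And>s. s \<in> S \<Longrightarrow> (f has_vector_derivative f' s) (at s within S)"
  shows "continuous_on S f"
  using d has_vector_derivative_continuous continuous_on_eq_continuous_within by blast

lemma deriv_sub:
  assumes "\<And>s. s \<in> {a..b} \<Longrightarrow> (f has_vector_derivative f' s) (at s within {a..b})"
    and "a \<le> c" "d \<le> b"
  shows "\<And>s. s \<in> {c..d} \<Longrightarrow> (f has_vector_derivative f' s) (at s within {c..d})"
  using assms by (meson atLeastAtMost_iff atLeastatMost_subset_iff has_vector_derivative_within_subset
      order_trans)

lemma rect_step:
  fixes f f' :: "real \<Rightarrow> 'a::banach"
  assumes ab: "a \<le> b"
    and d: "\<And>s. s \<in> {a..b} \<Longrightarrow> (f has_vector_derivative f' s) (at s within {a..b})"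
    and B: "\<And>s. s \<in> {a..b} \<Longrightarrow> norm (f' s) \<le> M"
  shows "norm (integral {a..b} f - (b - a) *\<^sub>R f b) \<le> M * (b - a)^2"
proof -
  have cont: "continuous_on {a..b} f" using cont_of_deriv[OF d] .
  have M0: "0 \<le> M" using B[of a] ab by (meson atLeastAtMost_iff norm_ge_zero order.refl order_trans)
  define g where "g s = integral {a..s} f - (s - a) *\<^sub>R f b" for s
  have gd: "(g has_vector_derivative (f s - f b)) (at s within {a..b})" if s: "s \<in> {a..b}" for s
  proof -
    have lin: "((\<lambda>s. s - a) has_real_derivative 1) (at s within {a..b})"
      by (auto intro!: derivative_eq_intros)
    have "((\<lambda>s. (s - a) *\<^sub>R f b) has_vector_derivative f b) (at s within {a..b})"
      using has_vector_derivative_scaleR[OF lin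
          has_vector_derivative_const[of "f b"]] by simp
    from has_vector_derivative_diff[OF integral_has_vector_derivative[OF cont s] this]
    show ?thesis unfolding g_def .
  qed
  have gB: "norm (f s - f b) \<le> M * (b - a)" if s: "s \<in> {a..b}" for s
  proof -
    have "norm (f b - f s) \<le> M * (b - s)"
      by (rule mvt_bound[of s b f f' M]) (use s ab in \<open>auto intro: deriv_sub[OF d] B\<close>)
    also have "\<dots> \<le> M * (b - a)" using s M0 by (intro mult_left_mono) auto
    finally show ?thesis by (simp add: norm_minus_commute)
  qed
  have "norm (g b - g a) \<le> (M * (b - a)) * (b - a)"
    by (rule mvt_bound[OF ab gd gB])
  moreover have "g a = 0" by (simp add: g_def)
  ultimately show ?thesis by (simp add: g_def power2_eq_square mult.assoc)
qed

lemma half_ident: fixes x y z :: "'a::real_normed_vector" shows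
 "x - ((s - a)/2) *\<^sub>R z - (1/2) *\<^sub>R (y + x) = (1/2) *\<^sub>R ((x - s *\<^sub>R z) - (y - a *\<^sub>R z))"
proof -
  have "x = (1/2) *\<^sub>R x + (1/2) *\<^sub>R x" by (simp flip: scaleR_add_left)
  then show ?thesis by (simp add: scaleR_diff_right scaleR_add_right diff_divide_distrib scaleR_diff_left algebra_simps)
qed

lemma trap_step:
  fixes f f1 f2 :: "real \<Rightarrow> 'a::banach"
  assumes ab: "a \<le> b"
    and d: "\<And>s. s \<in> {a..b} \<Longrightarrow> (f has_vector_derivative f1 s) (at s within {a..b})"
    and d1: "\<And>s. s \<in> {a..b} \<Longrightarrow> (f1 has_vector_derivative f2 s) (at s within {a..b})"
    and B: "\<And>s. s \<in> {a..b} \<Longrightarrow> norm (f2 s) \<le> M"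
  shows "norm (integral {a..b} f - ((b - a) / 2) *\<^sub>R (f a + f b)) \<le> M * (b - a)^3"
proof -
  have cont: "continuous_on {a..b} f" using cont_of_deriv[OF d] .
  have M0: "0 \<le> M" using B[of a] ab by (meson atLeastAtMost_iff norm_ge_zero order.refl order_trans)
  define g where "g s = integral {a..s} f - ((s - a) / 2) *\<^sub>R (f a + f s)" for s
  have gd: "(g has_vector_derivative (f s - ((s - a)/2) *\<^sub>R f1 s - (1/2) *\<^sub>R (f a + f s))) (at s within {a..b})"
    if s: "s \<in> {a..b}" for s
  proof -
    have lin: "((\<lambda>s. (s - a)/2) has_real_derivative 1/2) (at s within {a..b})"
      by (auto intro!: derivative_eq_intros)
    have "((\<lambda>s. ((s - a) / 2) *\<^sub>R (f a + f s)) has_vector_derivative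
        ((s - a)/2) *\<^sub>R f1 s + (1/2) *\<^sub>R (f a + f s)) (at s within {a..b})"
      using has_vector_derivative_scaleR[OF
          lin
          has_vector_derivative_add[OF has_vector_derivative_const[of "f a"] d[OF s]]] by simp
    from has_vector_derivative_diff[OF integral_has_vector_derivative[OF cont s] this]
    show ?thesis unfolding g_def by (simp add: algebra_simps)
  qed
  have gB: "norm (f s - ((s - a)/2) *\<^sub>R f1 s - (1/2) *\<^sub>R (f a + f s)) \<le> M * (b - a)^2"
    if s: "s \<in> {a..b}" for s
  proof -
    define h where "h u = f u - u *\<^sub>R f1 s" for u
    have hd: "(h has_vector_derivative (f1 u - f1 s)) (at u within {a..s})" if u: "u \<in> {a..s}" for u
    proof -
      have "((\<lambda>u. u *\<^sub>R f1 s) has_vector_derivative f1 s) (at u within {a..s})"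
        using has_vector_derivative_scaleR[OF DERIV_ident has_vector_derivative_const[of "f1 s"]] by simp
      from has_vector_derivative_diff[OF deriv_sub[OF d, of a s u] this]
      show ?thesis unfolding h_def using u s by simp
    qed
    have hB: "norm (f1 u - f1 s) \<le> M * (s - a)" if u: "u \<in> {a..s}" for u
    proof -
      have "norm (f1 s - f1 u) \<le> M * (s - u)"
        by (rule mvt_bound[of u s f1 f2 M]) (use s u ab in \<open>auto intro: deriv_sub[OF d1] B\<close>)
      also have "\<dots> \<le> M * (s - a)" using u M0 by (intro mult_left_mono) auto
      finally show ?thesis by (simp add: norm_minus_commute)
    qed
    have "norm (h s - h a) \<le> M * (s - a) * (s - a)"
      by (rule mvt_bound[OF _ hd hB]) (use s in auto)
    moreover have "f s - ((s - a)/2) *\<^sub>R f1 s - (1/2) *\<^sub>R (f a + f s) = (1/2) *\<^sub>R (h s - h a)"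
      unfolding h_def by (rule half_ident)
    ultimately have "norm (f s - ((s - a)/2) *\<^sub>R f1 s - (1/2) *\<^sub>R (f a + f s)) \<le> (1/2) * (M * (s - a) * (s - a))"
      by simp
    also have "\<dots> \<le> M * (b - a)^2"
    proof -
      have "(s - a) * (s - a) \<le> (b - a) * (b - a)" using s by (intro mult_mono) auto
      then have h: "M*((s-a)*(s-a)) \<le> M*((b-a)*(b-a))" using mult_left_mono M0 by blast
      have "0 \<le> M*((s-a)*(s-a))" using M0 by simp
      then show ?thesis using h unfolding power2_eq_square by (simp only: mult.assoc)
    qed
    finally show ?thesis .
  qed
  have "norm (g b - g a) \<le> (M * (b - a)^2) * (b - a)"
    by (rule mvt_bound[OF ab gd gB])
  moreover have "g a = 0" by (simp add: g_def)
  ultimately show ?thesis by (simp add: g_def power3_eq_cube power2_eq_square mult.assoc)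
qed


definition psum :: "real \<Rightarrow> (real \<Rightarrow> 'a::real_normed_vector) \<Rightarrow> nat \<Rightarrow> 'a" where
  "psum dt h n = (\<Sum>j=0..n. h (real (n - j) * dt))"
definition ssum :: "real \<Rightarrow> (real \<Rightarrow> 'a::real_normed_vector) \<Rightarrow> nat \<Rightarrow> 'a" where
  "ssum dt h n = (\<Sum>j=0..n. ((1/3::real) ^ Suc j) *\<^sub>R h (real (n - j) * dt))"

lemma psum_0: "psum dt h 0 = h 0" by (simp add: psum_def)
lemma ssum_0: "ssum dt h 0 = (1/3) *\<^sub>R h 0" by (simp add: ssum_def)
lemma psum_Suc: "psum dt h (Suc n) = h (real (Suc n) * dt) + psum dt h n"
  unfolding psum_def by (subst sum.atLeast0_atMost_Suc_shift) simp
lemma ssum_Suc: "ssum dt h (Suc n) = (1/3) *\<^sub>R h (real (Suc n) * dt) + (1/3) *\<^sub>R ssum dt h n"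
  unfolding ssum_def by (subst sum.atLeast0_atMost_Suc_shift) (simp add: scaleR_sum_right)
lemma psum_diff: "psum dt (\<lambda>x. a x - b x) n = psum dt a n - psum dt b n"
  by (simp add: psum_def sum_subtractf)
lemma ssum_diff: "ssum dt (\<lambda>x. a x - b x) n = ssum dt a n - ssum dt b n"
  by (simp add: ssum_def sum_subtractf scaleR_diff_right)

lemma psum_bound:
  assumes "h 0 = 0" "\<And>k. k \<le> n \<Longrightarrow> norm (h (real k * dt)) \<le> E"
  shows "norm (psum dt h n) \<le> real n * E"
  using assms(2)
proof (induction n)
  case 0 then show ?case using assms(1) by (simp add: psum_0)
next
  case (Suc n)
  have "norm (psum dt h (Suc n)) \<le> norm (h (real (Suc n) * dt)) + norm (psum dt h n)"
    unfolding psum_Suc by (rule norm_triangle_ineq)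
  also have "\<dots> \<le> E + real n * E" using Suc.IH Suc.prems Suc.prems[of "Suc n"] by (intro add_mono) auto
  finally show ?case by (simp add: algebra_simps)
qed

lemma ssum_bound:
  assumes "\<And>k. k \<le> n \<Longrightarrow> norm (h (real k * dt)) \<le> E"
  shows "norm (ssum dt h n) \<le> E / 2"
  using assms
proof (induction n)
  case 0 then show ?case using 0[of 0] norm_ge_zero[of "h 0"] by (simp add: ssum_0, linarith)
next
  case (Suc n)
  have "norm (ssum dt h (Suc n)) \<le> (1/3) * norm (h (real (Suc n) * dt)) + (1/3) * norm (ssum dt h n)"
    unfolding ssum_Suc by (rule order_trans[OF norm_triangle_ineq]) simp
  also have "\<dots> \<le> (1/3) * E + (1/3) * (E/2)" using Suc.IH Suc.prems Suc.prems[of "Suc n"] by (intro add_mono) auto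
  finally show ?case by simp
qed

lemma dsum_bound:
  assumes "h 0 = 0" "0 \<le> K"
    "\<And>k. 1 \<le> k \<Longrightarrow> k \<le> n \<Longrightarrow> norm (h (real k * dt) - h (real (k - 1) * dt)) \<le> K"
  shows "norm (ssum dt h n - (1/2) *\<^sub>R h (real n * dt)) \<le> K / 4"
  using assms(3)
proof (induction n)
  case 0 then show ?case using assms(1,2) by (simp add: ssum_0)
next
  case (Suc n)
  have id: "ssum dt h (Suc n) - (1/2) *\<^sub>R h (real (Suc n) * dt)
     = (1/3) *\<^sub>R (ssum dt h n - (1/2) *\<^sub>R h (real n * dt))
       - (1/6) *\<^sub>R (h (real (Suc n) * dt) - h (real n * dt))"
  proof -
    have "(1/2) *\<^sub>R h (real (Suc n) * dt) = (1/3) *\<^sub>R h (real (Suc n) * dt) + (1/6) *\<^sub>R h (real (Suc n) * dt)"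
      by (simp flip: scaleR_add_left)
    then show ?thesis unfolding ssum_Suc by (simp add: algebra_simps)
  qed
  have "norm (ssum dt h (Suc n) - (1/2) *\<^sub>R h (real (Suc n) * dt))
      \<le> (1/3) * norm (ssum dt h n - (1/2) *\<^sub>R h (real n * dt))
       + (1/6) * norm (h (real (Suc n) * dt) - h (real n * dt))"
    unfolding id by (rule order_trans[OF norm_triangle_ineq4]) simp
  also have "\<dots> \<le> (1/3) * (K/4) + (1/6) * K"
    using Suc.IH Suc.prems Suc.prems[of "Suc n"] by (intro add_mono) auto
  finally show ?case by simp
qed

lemma rect_sum:
  fixes f :: "real \<Rightarrow> 'a::banach"
  assumes dt: "dt > 0" and f0: "f 0 = 0" and cont: "continuous_on {0..real n * dt} f"
    and step: "\<And>k. k < n \<Longrightarrow> norm (integral {real k * dt..real (Suc k) * dt} f - dt *\<^sub>R f (real (Suc k) * dt)) \<le> Q"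
  shows "norm (integral {0..real n * dt} f - dt *\<^sub>R psum dt f n) \<le> real n * Q"
  using cont step
proof (induction n)
  case 0 then show ?case using f0 by (simp add: psum_0)
next
  case (Suc n)
  have sub: "{0..real n * dt} \<subseteq> {0..real (Suc n) * dt}" using dt by auto
  have "integral {0..real n * dt} f + integral {real n * dt..real (Suc n) * dt} f = integral {0..real (Suc n) * dt} f"
    by (rule Henstock_Kurzweil_Integration.integral_combine) (use dt Suc.prems(1) in \<open>auto intro: integrable_continuous_real\<close>)
  then have id: "integral {0..real (Suc n) * dt} f - dt *\<^sub>R psum dt f (Suc n)
     = (integral {0..real n * dt} f - dt *\<^sub>R psum dt f n)
       + (integral {real n * dt..real (Suc n) * dt} f - dt *\<^sub>R f (real (Suc n) * dt))"
    unfolding psum_Suc by (simp add: algebra_simps)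
  have "norm (integral {0..real n * dt} f - dt *\<^sub>R psum dt f n) \<le> real n * Q" (is "norm ?X \<le> _")
    using Suc.IH continuous_on_subset[OF Suc.prems(1) sub] Suc.prems(2) by auto
  moreover have "norm (integral {real n * dt..real (Suc n) * dt} f - dt *\<^sub>R f (real (Suc n) * dt)) \<le> Q" (is "norm ?Y \<le> _")
    using Suc.prems(2) by auto
  ultimately have "norm ?X + norm ?Y \<le> real (Suc n) * Q" by (simp add: algebra_simps)
  then show ?case unfolding id using norm_triangle_ineq[of ?X ?Y] by linarith
qed

lemma trap_sum:
  fixes f :: "real \<Rightarrow> 'a::banach"
  assumes dt: "dt > 0" and f0: "f 0 = 0" and cont: "continuous_on {0..real n * dt} f"
    and step: "\<And>k. k < n \<Longrightarrow> norm (integral {real k * dt..real (Suc k) * dt} f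
        - (dt / 2) *\<^sub>R (f (real k * dt) + f (real (Suc k) * dt))) \<le> Q"
  shows "norm (integral {0..real n * dt} f - dt *\<^sub>R psum dt f n + (dt/2) *\<^sub>R f (real n * dt)) \<le> real n * Q"
  using cont step
proof (induction n)
  case 0 then show ?case using f0 by (simp add: psum_0)
next
  case (Suc n)
  have sub: "{0..real n * dt} \<subseteq> {0..real (Suc n) * dt}" using dt by auto
  have "integral {0..real n * dt} f + integral {real n * dt..real (Suc n) * dt} f = integral {0..real (Suc n) * dt} f"
    by (rule Henstock_Kurzweil_Integration.integral_combine) (use dt Suc.prems(1) in \<open>auto intro: integrable_continuous_real\<close>)
  then have id: "integral {0..real (Suc n) * dt} f - dt *\<^sub>R psum dt f (Suc n) + (dt/2) *\<^sub>R f (real (Suc n) * dt)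
     = (integral {0..real n * dt} f - dt *\<^sub>R psum dt f n + (dt/2) *\<^sub>R f (real n * dt))
       + (integral {real n * dt..real (Suc n) * dt} f - (dt / 2) *\<^sub>R (f (real n * dt) + f (real (Suc n) * dt)))"
  proof -
    have "dt *\<^sub>R f (real (Suc n) * dt) = (dt/2) *\<^sub>R f (real (Suc n) * dt) + (dt/2) *\<^sub>R f (real (Suc n) * dt)"
      by (simp flip: scaleR_add_left)
    then show ?thesis using \<open>_ = integral {0..real (Suc n) * dt} f\<close>[symmetric]
      unfolding psum_Suc by (simp add: algebra_simps)
  qed
  have "norm (integral {0..real n * dt} f - dt *\<^sub>R psum dt f n + (dt/2) *\<^sub>R f (real n * dt)) \<le> real n * Q" (is "norm ?X \<le> _")
    using Suc.IH continuous_on_subset[OF Suc.prems(1) sub] Suc.prems(2) by auto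
  moreover have "norm (integral {real n * dt..real (Suc n) * dt} f - (dt / 2) *\<^sub>R (f (real n * dt) + f (real (Suc n) * dt))) \<le> Q" (is "norm ?Y \<le> _")
    using Suc.prems(2) by auto
  ultimately have "norm ?X + norm ?Y \<le> real (Suc n) * Q" by (simp add: algebra_simps)
  then show ?case unfolding id using norm_triangle_ineq[of ?X ?Y] by linarith
qed



lemma cq1: "cq_integral 1 dt h n = dt *\<^sub>R psum dt h n"
  unfolding cq_integral_def psum_def w1 scaleR_sum_right by simp

lemma cq2: "cq_integral 2 dt h n = dt *\<^sub>R psum dt h n - dt *\<^sub>R ssum dt h n"
  unfolding cq_integral_def psum_def ssum_def w2 scaleR_sum_right sum_subtractf[symmetric]
  by (intro sum.cong) (simp_all add: algebra_simps)

lemma sup_bound: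
  fixes g :: "real \<Rightarrow> 'a::real_normed_vector"
  assumes "continuous_on {0..t} g" "\<tau> \<in> {0..t}"
  shows "norm (g \<tau>) \<le> (SUP \<tau>\<in>{0..t}. norm (g \<tau>))"
proof -
  have "compact ((\<lambda>\<tau>. norm (g \<tau>)) ` {0..t})"
    by (intro compact_continuous_image continuous_on_norm assms(1)) simp
  then have "bdd_above ((\<lambda>\<tau>. norm (g \<tau>)) ` {0..t})"
    by (intro bounded_imp_bdd_above compact_imp_bounded)
  then show ?thesis using assms(2) by (rule cSUP_upper2) simp
qed



lemma norm4: fixes a b c d :: "'a::real_normed_vector"
  shows "norm (a + b + c - d) \<le> norm a + norm b + norm c + norm d"
  using norm_triangle_ineq4[of "a+b+c" d] norm_triangle_ineq[of "a+b" c] norm_triangle_ineq[of a b] by linarith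

theorem lemma6p1:
  fixes T :: real and p r :: nat
  assumes "T > 0" and "p \<in> {1, 2}" and "1 \<le> r" and "r \<le> p"
  shows "\<exists>C. \<forall>(dt::real) (Df :: nat \<Rightarrow> real \<Rightarrow> 'a::banach) (ft :: real \<Rightarrow> 'a) (n::nat).
     dt > 0 \<and> Cr_derivs r T Df \<and> continuous_on {0..T} ft
     \<and> (\<forall>k<r. Df k 0 = 0) \<and> ft 0 = 0 \<and> real n * dt \<le> T \<longrightarrow>
     norm (integral {0..real n * dt} (Df 0) - cq_integral p dt ft n)
       \<le> C * (real n * dt) *
          (dt ^ r * (SUP \<tau>\<in>{0..real n * dt}. norm (Df r \<tau>))
           + (SUP \<tau>\<in>{0..real n * dt}. norm (Df 0 \<tau> - ft \<tau>)))"
proof -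
  have pr: "(p = 1 \<and> r = 1) \<or> (p = 2 \<and> r = 1) \<or> (p = 2 \<and> r = 2)" using assms(2-4) by auto
  have main: "norm (integral {0..real n * dt} (Df 0) - cq_integral p dt ft n)
       \<le> 2 * (real n * dt) *
          (dt ^ r * (SUP \<tau>\<in>{0..real n * dt}. norm (Df r \<tau>))
           + (SUP \<tau>\<in>{0..real n * dt}. norm (Df 0 \<tau> - ft \<tau>)))"
    if dt: "dt > 0" and cr: "Cr_derivs r T Df" and ftc: "continuous_on {0..T} ft"
      and z: "\<forall>k<r. Df k 0 = 0" and ft0: "ft 0 = 0" and nT: "real n * dt \<le> T"
    for dt and Df :: "nat \<Rightarrow> real \<Rightarrow> 'a" and ft n
  proof -
    define t where "t = real n * dt"
    define f where "f = Df 0"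
    define g where "g = (\<lambda>\<tau>. f \<tau> - ft \<tau>)"
    define Mr where "Mr = (SUP \<tau>\<in>{0..t}. norm (Df r \<tau>))"
    define E where "E = (SUP \<tau>\<in>{0..t}. norm (Df 0 \<tau> - ft \<tau>))"
    have t0: "0 \<le> t" using dt by (simp add: t_def)
    have tT: "t \<le> T" using nT by (simp add: t_def)
    have sub: "{0..t} \<subseteq> {0..T}" using tT by auto
    have der: "\<And>k s. k < r \<Longrightarrow> s \<in> {0..T} \<Longrightarrow> (Df k has_vector_derivative Df (Suc k) s) (at s within {0..T})"
      using cr by (auto simp: Cr_derivs_def)
    have contr: "continuous_on {0..T} (Df r)" using cr by (simp add: Cr_derivs_def)
    have derT: "\<And>s. s \<in> {0..t} \<Longrightarrow> (Df k has_vector_derivative Df (Suc k) s) (at s within {0..t})"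
      if "k < r" for k
      using der[OF that] sub by (meson has_vector_derivative_within_subset subsetD)
    have contk: "continuous_on {0..t} (Df k)" if "k \<le> r" for k
    proof (cases "k < r")
      case True then show ?thesis using cont_of_deriv[OF derT[OF True]] by blast
    next
      case False then have "k = r" using that by simp
      then show ?thesis using continuous_on_subset[OF contr sub] by simp
    qed
    have goal: "norm (integral {0..t} f - cq_integral p dt ft n) \<le> 2 * t * (dt ^ r * Mr + E)"
    proof (cases "n = 0")
      case True
      then show ?thesis using ft0 by (simp add: t_def cq_integral_def)
    next
      case False
      have dtt: "dt \<le> t" using False dt by (simp add: t_def)
      have xk: "real k * dt \<in> {0..t}" if "k \<le> n" for k
        using that dt by (auto simp: t_def intro!: mult_right_mono)
      have Mb: "norm (Df r s) \<le> Mr" if "s \<in> {0..t}" for s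
        unfolding Mr_def by (rule sup_bound[OF contk that]) simp
      have gc: "continuous_on {0..t} g"
        unfolding g_def f_def by (intro continuous_on_diff contk continuous_on_subset[OF ftc sub]) simp
      have Eb: "norm (g s) \<le> E" if "s \<in> {0..t}" for s
        unfolding E_def using sup_bound[OF gc that] by (simp add: g_def f_def)
      have M0: "0 \<le> Mr" using Mb[of 0] t0 by (meson atLeastAtMost_iff norm_ge_zero order.trans order.refl)
      have E0: "0 \<le> E" using Eb[of 0] t0 by (meson atLeastAtMost_iff norm_ge_zero order.trans order.refl)
      have f0: "f 0 = 0" using z assms(3) by (simp add: f_def)
      have g0: "g 0 = 0" using f0 ft0 by (simp add: g_def)
      have Pg: "norm (psum dt g n) \<le> real n * E" by (rule psum_bound) (auto intro: g0 Eb xk)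
      have Sg: "norm (ssum dt g n) \<le> E / 2" by (rule ssum_bound) (auto intro: Eb xk)
      have fteq: "ft = (\<lambda>\<tau>. f \<tau> - g \<tau>)" by (simp add: g_def)
      have Pft: "psum dt ft n = psum dt f n - psum dt g n" unfolding fteq psum_diff ..
      have Sft: "ssum dt ft n = ssum dt f n - ssum dt g n" unfolding fteq ssum_diff ..
      have d0: "\<And>s. s \<in> {0..t} \<Longrightarrow> (f has_vector_derivative Df 1 s) (at s within {0..t})"
        unfolding f_def using derT[of 0] assms(3) by simp
      have fc: "continuous_on {0..t} f" using cont_of_deriv[OF d0] .
      have stp: "0 \<le> real k * dt" "real k * dt \<le> real (Suc k) * dt" "real (Suc k) * dt \<le> t"
        "real (Suc k) * dt - real k * dt = dt" if "k < n" for k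
        using xk[of "Suc k"] that dt by (auto simp: algebra_simps)
      have nt: "real n * dt = t" by (simp add: t_def)
      show ?thesis
      proof (cases "r = 1")
        case r1: True
        have rect: "norm (integral {real k * dt..real (Suc k) * dt} f - dt *\<^sub>R f (real (Suc k) * dt)) \<le> Mr * dt^2"
          if "k < n" for k
          using rect_step[OF stp(2)[OF that] deriv_sub[OF d0 stp(1)[OF that] stp(3)[OF that]], of Mr]
            Mb r1 stp(1,3)[OF that] stp(4)[OF that] by auto
        have A: "norm (integral {0..t} f - dt *\<^sub>R psum dt f n) \<le> real n * (Mr * dt^2)"
          using rect_sum[OF dt f0 _ rect, of n] fc by (simp add: nt)
        have An: "real n * (Mr * dt^2) = t * dt * Mr" by (simp add: t_def power2_eq_square)
        have fb: "norm (f (real k * dt)) \<le> Mr * t" if "k \<le> n" for k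
        proof -
          have "norm (f (real k * dt) - f 0) \<le> Mr * (real k * dt - 0)"
          proof (rule mvt_bound[of 0 "real k * dt" f "Df 1" Mr])
            show "\<And>s. s \<in> {0..real k * dt} \<Longrightarrow> (f has_vector_derivative Df 1 s) (at s within {0..real k * dt})"
              using deriv_sub[OF d0, of 0 "real k * dt"] xk[OF that] by auto
          qed (use xk[OF that] Mb r1 in auto)
          also have "\<dots> \<le> Mr * t" using xk[OF that] M0 by (intro mult_left_mono) auto
          finally show ?thesis using f0 by simp
        qed
        have nE: "dt * (real n * E) = t * E" by (simp add: t_def)
        have dE: "dt * E \<le> t * E" using dtt E0 by (rule mult_right_mono)
        show ?thesis
        proof (cases "p = 1")
          case True
          have "integral {0..t} f - cq_integral p dt ft n = (integral {0..t} f - dt *\<^sub>R psum dt f n) + dt *\<^sub>R psum dt g n"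
            unfolding True cq1 Pft by (simp add: algebra_simps)
          also have "norm \<dots> \<le> real n * (Mr * dt^2) + dt * (real n * E)"
            using A Pg dt by (intro order_trans[OF norm_triangle_ineq] add_mono) (auto intro: mult_left_mono)
          also have "\<dots> \<le> 2 * t * (dt ^ r * Mr + E)"
            unfolding An nE using r1 t0 dt M0 E0 by (simp add: algebra_simps mult_nonneg_nonneg)
          finally show ?thesis .
        next
          case False
          then have p2: "p = 2" using pr r1 by auto
          have Sf: "norm (ssum dt f n) \<le> Mr * t / 2" by (rule ssum_bound) (auto intro: fb)
          have "integral {0..t} f - cq_integral p dt ft n = (integral {0..t} f - dt *\<^sub>R psum dt f n) + dt *\<^sub>R psum dt g n + dt *\<^sub>R ssum dt f n - dt *\<^sub>R ssum dt g n"
            unfolding p2 cq2 Pft Sft by (simp add: algebra_simps)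
          also have "norm \<dots> \<le> real n * (Mr * dt^2) + dt * (real n * E) + dt * (Mr * t / 2) + dt * (E / 2)"
            using A Pg Sf Sg dt by (intro order_trans[OF norm4] add_mono) (auto intro: mult_left_mono)
          also have "\<dots> \<le> 2 * t * (dt ^ r * Mr + E)"
          proof -
            have X: "2 * t * (dt ^ r * Mr + E) = 2*(t*dt*Mr) + 2*(t*E)" using r1 by (simp add: algebra_simps)
            have Y: "dt * (Mr * t / 2) = (t*dt*Mr)/2" by (simp add: algebra_simps)
            have Z: "dt * (E/2) = (dt*E)/2" by simp
            have "0 \<le> t*dt*Mr" using t0 dt M0 by simp
            then show ?thesis unfolding An nE X Y Z using dE mult_nonneg_nonneg[OF t0 E0] by linarith
          qed
          finally show ?thesis .
        qed
      next
        case False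
        then have r2: "r = 2" and p2: "p = 2" using pr by auto
        have d1: "\<And>s. s \<in> {0..t} \<Longrightarrow> (Df 1 has_vector_derivative Df 2 s) (at s within {0..t})"
          using derT[of 1] r2 by (simp add: numeral_2_eq_2)
        have b1: "norm (Df 1 s) \<le> Mr * t" if s: "s \<in> {0..t}" for s
        proof -
          have "norm (Df 1 s - Df 1 0) \<le> Mr * (s - 0)"
          proof (rule mvt_bound[of 0 s "Df 1" "Df 2" Mr])
            show "\<And>u. u \<in> {0..s} \<Longrightarrow> (Df 1 has_vector_derivative Df 2 u) (at u within {0..s})"
              using deriv_sub[OF d1, of 0 s] s by auto
          qed (use s Mb r2 in auto)
          also have "\<dots> \<le> Mr * t" using s M0 by (intro mult_left_mono) auto
          finally show ?thesis using z r2 by simp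
        qed
        have trap: "norm (integral {real k * dt..real (Suc k) * dt} f - (dt / 2) *\<^sub>R (f (real k * dt) + f (real (Suc k) * dt))) \<le> Mr * dt^3"
          if "k < n" for k
          using trap_step[OF stp(2)[OF that] deriv_sub[OF d0 stp(1)[OF that] stp(3)[OF that]]
              deriv_sub[OF d1 stp(1)[OF that] stp(3)[OF that]], of Mr]
            Mb r2 stp(1,3)[OF that] stp(4)[OF that] by auto
        have B: "norm (integral {0..t} f - dt *\<^sub>R psum dt f n + (dt/2) *\<^sub>R f t) \<le> real n * (Mr * dt^3)"
          using trap_sum[OF dt f0 _ trap, of n] fc by (simp add: nt)
        have Bn: "real n * (Mr * dt^3) = t * dt^2 * Mr" by (simp add: t_def power2_eq_square power3_eq_cube)
        have K: "norm (f (real k * dt) - f (real (k - 1) * dt)) \<le> Mr * t * dt" if "1 \<le> k" "k \<le> n" for k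
        proof -
          have l1: "real (k - 1) * dt \<in> {0..t}" using xk[of "k - 1"] that by simp
          have w: "real k * dt - real (k - 1) * dt = dt" using that by (simp add: of_nat_diff algebra_simps)
          have "norm (f (real k * dt) - f (real (k - 1) * dt)) \<le> (Mr * t) * (real k * dt - real (k - 1) * dt)"
          proof (rule mvt_bound[of "real (k - 1) * dt" "real k * dt" f "Df 1" "Mr * t"])
            show "\<And>u. u \<in> {real (k - 1) * dt..real k * dt} \<Longrightarrow> (f has_vector_derivative Df 1 u) (at u within {real (k - 1) * dt..real k * dt})"
              using deriv_sub[OF d0, of "real (k - 1) * dt" "real k * dt"] xk[of k] l1 that by auto
            show "\<And>u. u \<in> {real (k - 1) * dt..real k * dt} \<Longrightarrow> norm (Df 1 u) \<le> Mr * t"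
              using xk[of k] l1 that by (intro b1) auto
          qed (use w dt in auto)
          then show ?thesis using w by simp
        qed
        have Mt0: "0 \<le> Mr * t * dt" using M0 t0 dt by simp
        have D: "norm (ssum dt f n - (1/2) *\<^sub>R f t) \<le> Mr * t * dt / 4"
          using dsum_bound[OF f0 Mt0 K, of n] by (simp add: nt)
        have nE: "dt * (real n * E) = t * E" by (simp add: t_def)
        have dE: "dt * E \<le> t * E" using dtt E0 by (rule mult_right_mono)
        have "integral {0..t} f - cq_integral p dt ft n = (integral {0..t} f - dt *\<^sub>R psum dt f n + (dt/2) *\<^sub>R f t) + dt *\<^sub>R psum dt g n + dt *\<^sub>R (ssum dt f n - (1/2) *\<^sub>R f t) - dt *\<^sub>R ssum dt g n"
          unfolding p2 cq2 Pft Sft by (simp add: algebra_simps)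
        also have "norm \<dots> \<le> real n * (Mr * dt^3) + dt * (real n * E) + dt * (Mr * t * dt / 4) + dt * (E / 2)"
          using B Pg D Sg dt by (intro order_trans[OF norm4] add_mono) (auto intro: mult_left_mono)
        also have "\<dots> \<le> 2 * t * (dt ^ r * Mr + E)"
        proof -
          have X: "2 * t * (dt ^ r * Mr + E) = 2*(t*dt^2*Mr) + 2*(t*E)" using r2 by (simp add: algebra_simps)
          have Y: "dt * (Mr * t * dt / 4) = (t*dt^2*Mr)/4" by (simp add: algebra_simps power2_eq_square)
          have Z: "dt * (E/2) = (dt*E)/2" by simp
          have "0 \<le> t*dt^2*Mr" using t0 dt M0 by simp
          then show ?thesis unfolding Bn nE X Y Z using dE mult_nonneg_nonneg[OF t0 E0] by linarith
        qed
        finally show ?thesis .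
      qed
    qed
    then show ?thesis by (simp add: t_def f_def Mr_def E_def)
  qed
  show ?thesis
    by (rule exI[of _ 2]) (use main in blast)
qed


end
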